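(* Let $\mathcal A_+,\mathcal A_-\subseteq\mathbb Z^n$ be disjoint finite sets with $\mathcal A_-\subseteq\operatorname{relint}(\operatorname{conv}(\mathcal A_+))$ such that $(\mathcal A_+,\mathcal A_-)$ is nonseparable. Then $\mathcal C_{\mathrm{SONC}}(\mathcal A_+,\mathcal A_-)=\mathcal C(\mathcal A_+,\mathcal A_-)$; that is, every copositive real Laurent polynomial with signed support $(\mathcal A_+,\mathcal A_-)$ is a sum of copositive circuit signomials.
   Context: A signomial with signed support $(\mathcal A_+,\mathcal A_-)$ is $f(x)=\sum_{a\in\mathcal A_+}c_ax^a-\sum_{b\in\mathcal A_-}c_bx^b$ on $\mathbb R^n_{>0}$ with all $c_a,c_b>0$; $\mathcal S(\mathcal A_+,\mathcal A_-)$ is the set of these. Copositive means nonnegative on $\mathbb R^n_{>0}$. Let $d=\dim\operatorname{conv}(\mathcal A_+\cup\mathcal A_-)$; $\mathcal F(\mathcal A_+)$ is the common refinement of all regular polyhedral subdivisions of $\mathcal A_+$, $\mathcal F_d(\mathcal A_+)$ its $d$-cells; $(\mathcal A_+,\mathcal A_-)$ is nonseparable if $\mathcal A_-\subseteq\operatorname{relint}\operatorname{conv}(\mathcal A_+)$ and some $D\in\mathcal F_d(\mathcal A_+)$ contains $\mathcal A_-$. A signed support $(\mathcal B_+,\mathcal B_-)$ is a circuit if either $\#(\mathcal B_+\cup\mathcal B_-)=\#\mathcal B_+=1$, or $\operatorname{conv}(\mathcal B_+\cup\mathcal B_-)$ is a simplex with vertex set $\mathcal B_+$, $\#\mathcal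 B_-=1$ and $\mathcal B_-\subseteq\operatorname{relint}\operatorname{conv}(\mathcal B_+)$; a circuit signomial has circuit signed support. A signomial is SONC if it is a finite sum of copositive circuit signomials. $\mathcal C_{\mathrm{SONC}}(\mathcal A_+,\mathcal A_-)$ and $\mathcal C(\mathcal A_+,\mathcal A_-)$ are the SONC, resp. copositive, elements of $\mathcal S(\mathcal A_+,\mathcal A_-)$. *)

theory Defs
  imports "HOL-Analysis.Analysis"
begin

definition pos_orthant :: "(real ^ 'n) set" where
  "pos_orthant = {x. \<forall>i. x $ i > 0}"

definition monom :: "real ^ 'n \<Rightarrow> real ^ 'n \<Rightarrow> real" where
  "monom a x = (\<Prod>i\<in>UNIV. (x $ i) powr (a $ i))"

definition signed_support :: "(real ^ 'n) set \<Rightarrow> (real ^ 'n) set \<Rightarrow> bool" where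
  "signed_support Ap Am \<longleftrightarrow> finite Ap \<and> finite Am \<and> Ap \<inter> Am = {}"

definition signomials :: "(real ^ 'n) set \<Rightarrow> (real ^ 'n) set \<Rightarrow> (real ^ 'n \<Rightarrow> real) set" where
  "signomials Ap Am = {f. \<exists>c. (\<forall>a\<in>Ap \<union> Am. c a > 0) \<and>
      f = (\<lambda>x. (\<Sum>a\<in>Ap. c a * monom a x) - (\<Sum>b\<in>Am. c b * monom b x))}"

definition copositive :: "(real ^ 'n \<Rightarrow> real) \<Rightarrow> bool" where
  "copositive f \<longleftrightarrow> (\<forall>x\<in>pos_orthant. f x \<ge> 0)"

definition circuit :: "(real ^ 'n) set \<Rightarrow> (real ^ 'n) set \<Rightarrow> bool" where
  "circuit Bp Bm \<longleftrightarrow> signed_support Bp Bm \<and>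
     ((card (Bp \<union> Bm) = 1 \<and> card Bp = 1) \<or>
      ((\<exists>k. k simplex (convex hull (Bp \<union> Bm))) \<and>
       {v. v extreme_point_of (convex hull (Bp \<union> Bm))} = Bp \<and>
       card Bm = 1 \<and> Bm \<subseteq> rel_interior (convex hull Bp)))"

definition circuit_signomial :: "(real ^ 'n \<Rightarrow> real) \<Rightarrow> bool" where
  "circuit_signomial g \<longleftrightarrow> (\<exists>Bp Bm. circuit Bp Bm \<and> g \<in> signomials Bp Bm)"

definition SONC :: "(real ^ 'n \<Rightarrow> real) \<Rightarrow> bool" where
  "SONC f \<longleftrightarrow> (\<exists>gs. (\<forall>g\<in>set gs. circuit_signomial g \<and> copositive g) \<and>
      (\<forall>x\<in>pos_orthant. f x = (\<Sum>g\<leftarrow>gs. g x)))"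

definition C_SONC :: "(real ^ 'n) set \<Rightarrow> (real ^ 'n) set \<Rightarrow> (real ^ 'n \<Rightarrow> real) set" where
  "C_SONC Ap Am = {f \<in> signomials Ap Am. SONC f}"

definition C_copos :: "(real ^ 'n) set \<Rightarrow> (real ^ 'n) set \<Rightarrow> (real ^ 'n \<Rightarrow> real) set" where
  "C_copos Ap Am = {f \<in> signomials Ap Am. copositive f}"

text \<open>Cells of the regular polyhedral subdivision of the point configuration A induced by
  the height function h: the convex hulls of the (nonempty) point sets of A lying on a
  lower face of the lifted configuration, i.e. the sets where an affine function lying
  weakly below h on A attains equality.\<close>
definition reg_cells :: "(real ^ 'n) set \<Rightarrow> (real ^ 'n \<Rightarrow> real) \<Rightarrow> (real ^ 'n) set set" where
  "reg_cells A h = {convex hull C | C. C \<noteq> {} \<and> C \<subseteq> A \<and>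
      (\<exists>w c. (\<forall>a\<in>A. w \<bullet> a + c \<le> h a) \<and> C = {a\<in>A. w \<bullet> a + c = h a})}"

text \<open>F(A): common refinement of all regular subdivisions of A; its cells are the
  nonempty intersections of one cell from each regular subdivision.\<close>
definition common_refinement :: "(real ^ 'n) set \<Rightarrow> (real ^ 'n) set set" where
  "common_refinement A = {P. P \<noteq> {} \<and>
      (\<exists>\<sigma>. (\<forall>h. \<sigma> h \<in> reg_cells A h) \<and> P = \<Inter> (range \<sigma>))}"

definition refinement_cells_dim :: "int \<Rightarrow> (real ^ 'n) set \<Rightarrow> (real ^ 'n) set set" where
  "refinement_cells_dim d A = {P \<in> common_refinement A. aff_dim P = d}"

definition nonseparable :: "(real ^ 'n) set \<Rightarrow> (real ^ 'n) set \<Rightarrow> bool" where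
  "nonseparable Ap Am \<longleftrightarrow> Am \<subseteq> rel_interior (convex hull Ap) \<and>
     (\<exists>D\<in>refinement_cells_dim (aff_dim (convex hull (Ap \<union> Am))) Ap. Am \<subseteq> D)"

end

theory Submission
  imports Defs "HOL-Library.Nat_Bijection"
begin

lemma FM_nat:
  fixes A :: "nat \<Rightarrow> 'v \<Rightarrow> real" and B :: "nat \<Rightarrow> real"
  assumes "finite V" "finite R"
    and "\<not> (\<exists>x. \<forall>r\<in>R. (\<Sum>v\<in>V. A r v * x v) \<le> B r)"
  shows "\<exists>y. (\<forall>r\<in>R. 0 \<le> y r) \<and> (\<forall>v\<in>V. (\<Sum>r\<in>R. y r * A r v) = 0) \<and> (\<Sum>r\<in>R. y r * B r) < 0"
  using assms
proof (induction V arbitrary: R A B rule: finite_induct)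
  case empty
  then obtain r where r: "r \<in> R" "B r < 0"
    by (metis not_le sum.empty)
  have "(\<Sum>i\<in>R. (if i = r then 1 else 0) * B i) = (\<Sum>i\<in>R. if i = r then B i else 0)"
    by (rule sum.cong) auto
  also have "\<dots> = B r" using r empty.prems by simp
  finally show ?case using r
    by (intro exI[of _ "\<lambda>i. if i = r then 1 else 0"]) auto
next
  case (insert k V)
  define P where "P = {r\<in>R. A r k > 0}"
  define N where "N = {r\<in>R. A r k < 0}"
  define Z where "Z = {r\<in>R. A r k = 0}"
  have fin: "finite P" "finite N" "finite Z" using insert.prems(1) by (auto simp: P_def N_def Z_def)
  define enc where "enc = (\<lambda>(p::nat,q::nat). 2 * prod_encode (p,q) + 1)"
  define comb where "comb L i = (if even i then L (i div 2) else
      (case prod_decode (i div 2) of (p,q) \<Rightarrow> (- A q k) * L p + A p k * L q))" for L :: "nat \<Rightarrow> real" and i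
  define R' where "R' = (\<lambda>r. 2*r) ` Z \<union> enc ` (P \<times> N)"
  define A' where "A' i v = comb (\<lambda>r. A r v) i" for i v
  define B' where "B' = comb B"
  have comb_enc: "comb L (enc (p,q)) = (- A q k) * L p + A p k * L q" for L p q
    by (simp add: comb_def enc_def)
  have comb_ev: "comb L (2*r) = L r" for L r
    by (simp add: comb_def)
  have finR': "finite R'" using fin by (simp add: R'_def)
  have "\<not> (\<exists>x. \<forall>i\<in>R'. (\<Sum>v\<in>V. A' i v * x v) \<le> B' i)"
  proof
    assume "\<exists>x. \<forall>i\<in>R'. (\<Sum>v\<in>V. A' i v * x v) \<le> B' i"
    then obtain x' where x': "\<And>i. i\<in>R' \<Longrightarrow> (\<Sum>v\<in>V. A' i v * x' v) \<le> B' i" by blast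
    define s where "s r = (\<Sum>v\<in>V. A r v * x' v)" for r
    have lin: "(\<Sum>v\<in>V. A' i v * x' v) = comb s i" for i
      by (simp add: A'_def comb_def s_def sum_distrib_left sum.distrib sum_subtractf sum_negf algebra_simps split: prod.splits)
    have Zs: "s r \<le> B r" if "r \<in> Z" for r
      using x'[of "2*r"] that by (simp add: lin comb_ev B'_def R'_def)
    have PN: "(- A q k) * s p + A p k * s q \<le> (- A q k) * B p + A p k * B q" if "p \<in> P" "q \<in> N" for p q
      using x'[of "enc (p,q)"] that by (simp add: lin comb_enc B'_def R'_def)
    define U where "U p = (B p - s p) / A p k" for p
    define L where "L q = (B q - s q) / A q k" for q
    have LU: "L q \<le> U p" if "p \<in> P" "q \<in> N" for p q
    proof -
      have ap: "A p k > 0" and aq: "A q k < 0" using that by (auto simp: P_def N_def)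
      have "(- A q k) * s p + A p k * s q \<le> (- A q k) * B p + A p k * B q" using PN[OF that] .
      then have "A p k * (s q - B q) \<le> (- A q k) * (B p - s p)" by (simp add: algebra_simps)
      then show ?thesis using ap aq unfolding U_def L_def
        by (simp add: field_simps)
    qed
    define t where "t = (if N = {} then (if P = {} then 0 else Min (U ` P)) else Max (L ` N))"
    have tU: "t \<le> U p" if "p \<in> P" for p
    proof (cases "N = {}")
      case True then show ?thesis using that fin by (auto simp: t_def)
    next
      case False
      then obtain q where "q \<in> N" "Max (L ` N) = L q" using fin
        by (metis (mono_tags, opaque_lifting) Max_in finite_imageI image_iff image_is_empty)
      then show ?thesis using False LU[OF that] by (simp add: t_def)
    qed
    have tL: "L q \<le> t" if "q \<in> N" for q
      using that fin by (auto simp: t_def)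
    define x where "x = x'(k := t)"
    have sumx: "(\<Sum>v\<in>insert k V. A r v * x v) = A r k * t + s r" for r
    proof -
      have "(\<Sum>v\<in>V. A r v * x v) = s r" unfolding s_def x_def using insert.hyps(2)
        by (intro sum.cong) auto
      then show ?thesis using insert.hyps by (simp add: x_def)
    qed
    have "\<forall>r\<in>R. (\<Sum>v\<in>insert k V. A r v * x v) \<le> B r"
    proof
      fix r assume r: "r \<in> R"
      consider "r \<in> Z" | "r \<in> P" | "r \<in> N" using r unfolding P_def N_def Z_def by (metis (mono_tags, lifting) linorder_neqE_linordered_idom mem_Collect_eq)
      then show "(\<Sum>v\<in>insert k V. A r v * x v) \<le> B r"
      proof cases
        case 1 then show ?thesis using Zs[OF 1] by (simp add: sumx Z_def)
      next
        case 2
        then have ap: "A r k > 0" by (simp add: P_def)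
        have "t \<le> (B r - s r) / A r k" using tU[OF 2] by (simp add: U_def)
        then have "A r k * t \<le> B r - s r" using ap by (simp add: field_simps)
        then show ?thesis by (simp add: sumx)
      next
        case 3
        then have aq: "A r k < 0" by (simp add: N_def)
        have "(B r - s r) / A r k \<le> t" using tL[OF 3] by (simp add: L_def)
        then have "A r k * t \<le> B r - s r" using aq by (simp add: field_simps)
        then show ?thesis by (simp add: sumx)
      qed
    qed
    then show False using insert.prems(2) by blast
  qed
  from insert.IH[OF finR' this] obtain y' where
    y'0: "\<forall>i\<in>R'. 0 \<le> y' i" and
    y'V: "\<forall>v\<in>V. (\<Sum>i\<in>R'. y' i * A' i v) = 0" and
    y'B: "(\<Sum>i\<in>R'. y' i * B' i) < 0" by blast
  define y where "y r = (if r \<in> Z then y' (2*r) else 0)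
     + (if r \<in> P then (\<Sum>q\<in>N. y' (enc (r,q)) * (- A q k)) else 0)
     + (if r \<in> N then (\<Sum>p\<in>P. y' (enc (p,r)) * A p k) else 0)" for r
  have encR': "enc (p,q) \<in> R'" if "p \<in> P" "q \<in> N" for p q using that by (auto simp: R'_def)
  have ZR': "2*r \<in> R'" if "r \<in> Z" for r using that by (auto simp: R'_def)
  have y0: "\<forall>r\<in>R. 0 \<le> y r"
  proof
    fix r assume "r \<in> R"
    have a: "0 \<le> (\<Sum>q\<in>N. y' (enc (r,q)) * (- A q k))" if "r \<in> P"
      using that y'0 encR' by (intro sum_nonneg mult_nonneg_nonneg; auto simp: N_def)
    have b: "0 \<le> (\<Sum>p\<in>P. y' (enc (p,r)) * A p k)" if "r \<in> N"
      using that y'0 encR' by (intro sum_nonneg mult_nonneg_nonneg; auto simp: P_def)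
    show "0 \<le> y r" unfolding y_def using a b y'0 ZR' by auto
  qed
  have ident: "(\<Sum>r\<in>R. y r * G r) = (\<Sum>i\<in>R'. y' i * comb G i)" for G
  proof -
    have injenc: "inj_on enc (P \<times> N)"
      by (auto simp: inj_on_def enc_def prod_encode_eq)
    have disj: "(\<lambda>r. 2*r) ` Z \<inter> enc ` (P \<times> N) = {}"
      by (auto simp: enc_def) presburger
    have "(\<Sum>i\<in>R'. y' i * comb G i) = (\<Sum>i\<in>(\<lambda>r. 2*r) ` Z. y' i * comb G i) + (\<Sum>i\<in>enc ` (P \<times> N). y' i * comb G i)"
      unfolding R'_def using fin disj by (simp add: sum.union_disjoint)
    also have "(\<Sum>i\<in>(\<lambda>r. 2*r) ` Z. y' i * comb G i) = (\<Sum>r\<in>Z. y' (2*r) * G r)"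
      by (subst sum.reindex) (auto simp: inj_on_def comb_ev)
    also have "(\<Sum>i\<in>enc ` (P \<times> N). y' i * comb G i) = (\<Sum>pq\<in>P \<times> N. y' (enc pq) * comb G (enc pq))"
      by (subst sum.reindex[OF injenc]) simp
    also have "\<dots> = (\<Sum>p\<in>P. \<Sum>q\<in>N. y' (enc (p,q)) * ((- A q k) * G p + A p k * G q))"
      by (simp add: sum.cartesian_product) (rule sum.cong, auto simp: comb_enc)
    also have "\<dots> = (\<Sum>p\<in>P. (\<Sum>q\<in>N. y' (enc (p,q)) * (- A q k)) * G p) + (\<Sum>q\<in>N. (\<Sum>p\<in>P. y' (enc (p,q)) * A p k) * G q)"
    proof -
      have e1: "(\<Sum>p\<in>P. \<Sum>q\<in>N. y' (enc (p,q)) * ((- A q k) * G p + A p k * G q)) =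
        (\<Sum>p\<in>P. \<Sum>q\<in>N. y' (enc (p,q)) * (- A q k) * G p) + (\<Sum>p\<in>P. \<Sum>q\<in>N. y' (enc (p,q)) * A p k * G q)"
        by (simp add: sum.distrib[symmetric] distrib_left right_diff_distrib mult.assoc)
      have e2: "(\<Sum>p\<in>P. \<Sum>q\<in>N. y' (enc (p,q)) * (- A q k) * G p) = (\<Sum>p\<in>P. (\<Sum>q\<in>N. y' (enc (p,q)) * (- A q k)) * G p)"
        by (simp add: sum_distrib_right)
      have e3: "(\<Sum>p\<in>P. \<Sum>q\<in>N. y' (enc (p,q)) * A p k * G q) = (\<Sum>q\<in>N. (\<Sum>p\<in>P. y' (enc (p,q)) * A p k) * G q)"
        by (subst sum.swap) (simp add: sum_distrib_right)
      show ?thesis using e1 e2 e3 by simp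
    qed
    finally have rhs: "(\<Sum>i\<in>R'. y' i * comb G i) = (\<Sum>r\<in>Z. y' (2*r) * G r) + (\<Sum>p\<in>P. (\<Sum>q\<in>N. y' (enc (p,q)) * (- A q k)) * G p) + (\<Sum>q\<in>N. (\<Sum>p\<in>P. y' (enc (p,q)) * A p k) * G q)"
      by simp
    have RU: "R = Z \<union> P \<union> N" by (auto simp: P_def N_def Z_def)
    have "(\<Sum>r\<in>R. y r * G r) = (\<Sum>r\<in>Z. y r * G r) + (\<Sum>r\<in>P. y r * G r) + (\<Sum>r\<in>N. y r * G r)"
      unfolding RU using fin
      by (subst sum.union_disjoint, simp_all, fastforce simp: P_def N_def Z_def)+
    also have "(\<Sum>r\<in>Z. y r * G r) = (\<Sum>r\<in>Z. y' (2*r) * G r)"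
      by (rule sum.cong) (auto simp: y_def P_def N_def Z_def)
    also have "(\<Sum>r\<in>P. y r * G r) = (\<Sum>p\<in>P. (\<Sum>q\<in>N. y' (enc (p,q)) * (- A q k)) * G p)"
      by (rule sum.cong) (auto simp: y_def P_def N_def Z_def)
    also have "(\<Sum>r\<in>N. y r * G r) = (\<Sum>q\<in>N. (\<Sum>p\<in>P. y' (enc (p,q)) * A p k) * G q)"
      by (rule sum.cong) (auto simp: y_def P_def N_def Z_def)
    finally show ?thesis using rhs by simp
  qed
  have "\<forall>v\<in>insert k V. (\<Sum>r\<in>R. y r * A r v) = 0"
  proof
    fix v assume "v \<in> insert k V"
    then consider "v = k" | "v \<in> V" by auto
    then show "(\<Sum>r\<in>R. y r * A r v) = 0"
    proof cases
      case 1
      have "(\<Sum>r\<in>R. y r * A r v) = (\<Sum>i\<in>R'. y' i * comb (\<lambda>r. A r k) i)"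
        using ident 1 by simp
      also have "\<dots> = 0"
        by (rule sum.neutral) (auto simp: R'_def comb_enc comb_ev Z_def)
      finally show ?thesis .
    next
      case 2
      then show ?thesis using ident[of "\<lambda>r. A r v"] y'V by (simp add: A'_def)
    qed
  qed
  moreover have "(\<Sum>r\<in>R. y r * B r) < 0" using ident[of B] y'B by (simp add: B'_def)
  ultimately show ?case using y0 by blast
qed

lemma FM_gen:
  fixes A :: "'r \<Rightarrow> 'v \<Rightarrow> real" and B :: "'r \<Rightarrow> real"
  assumes "finite V" "finite R"
    and "\<not> (\<exists>x. \<forall>r\<in>R. (\<Sum>v\<in>V. A r v * x v) \<le> B r)"
  shows "\<exists>y. (\<forall>r\<in>R. 0 \<le> y r) \<and> (\<forall>v\<in>V. (\<Sum>r\<in>R. y r * A r v) = 0) \<and> (\<Sum>r\<in>R. y r * B r) < 0"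
proof -
  obtain g :: "'r \<Rightarrow> nat" and n where g: "g ` R = {i. i<n}" "inj_on g R"
    using finite_imp_inj_to_nat_seg[OF assms(2)] by blast
  define h where "h = the_inv_into R g"
  have hg: "h (g r) = r" if "r \<in> R" for r
    using that g(2) by (simp add: h_def the_inv_into_f_f)
  define A' where "A' i v = A (h i) v" for i v
  define B' where "B' i = B (h i)" for i
  have "\<not> (\<exists>x. \<forall>i\<in>g ` R. (\<Sum>v\<in>V. A' i v * x v) \<le> B' i)"
    using assms(3) by (auto simp: A'_def B'_def hg)
  from FM_nat[OF assms(1) _ this] g obtain y' where
    y': "\<forall>i\<in>g ` R. 0 \<le> y' i" "\<forall>v\<in>V. (\<Sum>i\<in>g ` R. y' i * A' i v) = 0" "(\<Sum>i\<in>g ` R. y' i * B' i) < 0"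
    by auto
  have re: "(\<Sum>i\<in>g ` R. y' i * F (h i)) = (\<Sum>r\<in>R. y' (g r) * F r)" for F :: "'r \<Rightarrow> real"
    by (subst sum.reindex[OF g(2)]) (auto simp: hg intro!: sum.cong)
  show ?thesis
    using y' re[of B] re[of "\<lambda>r. A r v" for v]
    by (intro exI[of _ "\<lambda>r. y' (g r)"]) (auto simp: A'_def B'_def)
qed

lemma farkas_eq:
  fixes M :: "'e \<Rightarrow> 'v \<Rightarrow> real" and t :: "'e \<Rightarrow> real"
  assumes "finite V" "finite E"
    and "\<not> (\<exists>x. (\<forall>v\<in>V. 0 \<le> x v) \<and> (\<forall>e\<in>E. (\<Sum>v\<in>V. M e v * x v) = t e))"
  shows "\<exists>z. (\<forall>v\<in>V. 0 \<le> (\<Sum>e\<in>E. z e * M e v)) \<and> (\<Sum>e\<in>E. z e * t e) < 0"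
proof -
  define A where "A r w = (case r of Inl v \<Rightarrow> (if w = v then -1 else 0)
       | Inr (Inl e) \<Rightarrow> M e w | Inr (Inr e) \<Rightarrow> - M e w)" for r :: "'v + 'e + 'e" and w
  define B where "B r = (case r of Inl v \<Rightarrow> 0 | Inr (Inl e) \<Rightarrow> t e | Inr (Inr e) \<Rightarrow> - t e)" for r :: "'v + 'e + 'e"
  define R where "R = Inl ` V \<union> Inr ` (Inl ` E \<union> Inr ` E)"
  have finR: "finite R" using assms by (simp add: R_def)
  have split: "(\<Sum>r\<in>R. F r) = (\<Sum>v\<in>V. F (Inl v)) + (\<Sum>e\<in>E. F (Inr (Inl e))) + (\<Sum>e\<in>E. F (Inr (Inr e)))"
    for F :: "'v + 'e + 'e \<Rightarrow> real"
  proof -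
    have "(\<Sum>r\<in>R. F r) = (\<Sum>r\<in>Inl ` V. F r) + (\<Sum>r\<in>Inr ` (Inl ` E \<union> Inr ` E). F r)"
      unfolding R_def using assms by (intro sum.union_disjoint) auto
    also have "(\<Sum>r\<in>Inr ` (Inl ` E \<union> Inr ` E). F r) = (\<Sum>r\<in>Inl ` E \<union> Inr ` E. F (Inr r))"
      by (simp add: sum.reindex)
    also have "\<dots> = (\<Sum>r\<in>Inl ` E. F (Inr r)) + (\<Sum>r\<in>Inr ` E. F (Inr r))"
      using assms by (intro sum.union_disjoint) auto
    finally show ?thesis by (simp add: sum.reindex add.assoc)
  qed
  have sdelta: "(\<Sum>w\<in>V. (if w = v then -1 else 0) * x w) = (if v \<in> V then - x v else 0)" for v and x :: "'v \<Rightarrow> real"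
  proof -
    have "(\<Sum>w\<in>V. (if w = v then -1 else 0) * x w) = (\<Sum>w\<in>V. if w = v then - x w else 0)"
      by (rule sum.cong) auto
    then show ?thesis using assms(1) by simp
  qed
  have "\<not> (\<exists>x. \<forall>r\<in>R. (\<Sum>v\<in>V. A r v * x v) \<le> B r)"
  proof
    assume "\<exists>x. \<forall>r\<in>R. (\<Sum>v\<in>V. A r v * x v) \<le> B r"
    then obtain x where x: "\<And>r. r\<in>R \<Longrightarrow> (\<Sum>v\<in>V. A r v * x v) \<le> B r" by blast
    have "\<forall>v\<in>V. 0 \<le> x v"
    proof
      fix v assume v: "v \<in> V"
      show "0 \<le> x v" using x[of "Inl v"] v sdelta[of v x] by (simp add: R_def A_def B_def)
    qed
    moreover have "\<forall>e\<in>E. (\<Sum>v\<in>V. M e v * x v) = t e"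
    proof
      fix e assume e: "e \<in> E"
      have "(\<Sum>v\<in>V. M e v * x v) \<le> t e" using x[of "Inr (Inl e)"] e by (simp add: R_def A_def B_def)
      moreover have "- (\<Sum>v\<in>V. M e v * x v) \<le> - t e" using x[of "Inr (Inr e)"] e
        by (simp add: R_def A_def B_def sum_negf)
      ultimately show "(\<Sum>v\<in>V. M e v * x v) = t e" by linarith
    qed
    ultimately show False using assms(3) by blast
  qed
  from FM_gen[OF assms(1) finR this] obtain y where
    y: "\<forall>r\<in>R. 0 \<le> y r" "\<forall>v\<in>V. (\<Sum>r\<in>R. y r * A r v) = 0" "(\<Sum>r\<in>R. y r * B r) < 0" by blast
  define z where "z e = y (Inr (Inl e)) - y (Inr (Inr e))" for e
  have "\<forall>v\<in>V. 0 \<le> (\<Sum>e\<in>E. z e * M e v)"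
  proof
    fix v assume v: "v \<in> V"
    have "(\<Sum>r\<in>R. y r * A r v) = (\<Sum>w\<in>V. y (Inl w) * (if v = w then -1 else 0)) + (\<Sum>e\<in>E. z e * M e v)"
      by (simp add: split A_def z_def algebra_simps sum_subtractf sum_negf)
    also have "(\<Sum>w\<in>V. y (Inl w) * (if v = w then -1 else 0)) = - y (Inl v)"
    proof -
      have "(\<Sum>w\<in>V. y (Inl w) * (if v = w then -1 else 0)) = (\<Sum>w\<in>V. if v = w then - y (Inl w) else 0)"
        by (rule sum.cong) auto
      then show ?thesis using assms(1) v by simp
    qed
    finally show "0 \<le> (\<Sum>e\<in>E. z e * M e v)" using y(1,2) v by (auto simp: R_def)
  qed
  moreover have "(\<Sum>e\<in>E. z e * t e) < 0"
    using y(3) by (simp add: split B_def z_def algebra_simps sum_subtractf sum_negf)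
  ultimately show ?thesis by blast
qed

lemma hull_affine_bound:
  fixes K :: "(real^'n) set" and w v :: "real^'n"
  assumes "finite K" "b \<in> convex hull K"
    and "\<And>a. a \<in> K \<Longrightarrow> - (g + v \<bullet> a) \<le> w \<bullet> a + c"
  shows "- (g + v \<bullet> b) \<le> w \<bullet> b + c"
proof -
  obtain u where u: "\<forall>x\<in>K. 0 \<le> u x" "sum u K = 1" "(\<Sum>x\<in>K. u x *\<^sub>R x) = b"
    using assms(2) convex_hull_finite[OF assms(1)] by auto
  have e1: "v \<bullet> b = (\<Sum>x\<in>K. u x * (v \<bullet> x))" "w \<bullet> b = (\<Sum>x\<in>K. u x * (w \<bullet> x))"
    by (simp_all add: inner_sum_right flip: u(3))
  have e2: "(\<Sum>x\<in>K. u x * (- (g + v \<bullet> x))) = - (g * sum u K) - (\<Sum>x\<in>K. u x * (v \<bullet> x))"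
    by (simp add: algebra_simps sum.distrib sum_distrib_left sum_negf sum_subtractf)
  have e3: "(\<Sum>x\<in>K. u x * (w \<bullet> x + c)) = (\<Sum>x\<in>K. u x * (w \<bullet> x)) + c * sum u K"
    by (simp add: algebra_simps sum.distrib sum_distrib_left)
  have "- (g + v \<bullet> b) = (\<Sum>x\<in>K. u x * (- (g + v \<bullet> x)))"
    using e1 e2 u(2) by simp
  also have "\<dots> \<le> (\<Sum>x\<in>K. u x * (w \<bullet> x + c))"
    using u(1) assms(3) by (intro sum_mono mult_left_mono) auto
  also have "\<dots> = w \<bullet> b + c"
    using e1 e3 u(2) by simp
  finally show ?thesis .
qed

lemma split_exists:
  fixes Ap Am :: "(real^'n) set" and C D :: "real^'n \<Rightarrow> real"
  assumes fin: "finite Ap" "finite Am"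
    and NS: "\<forall>h. \<exists>w c. (\<forall>a\<in>Ap. w \<bullet> a + c \<le> h a) \<and> Am \<subseteq> convex hull {a\<in>Ap. w \<bullet> a + c = h a}"
    and Cpos: "\<forall>a\<in>Ap. 0 \<le> C a" and Dpos: "\<forall>b\<in>Am. 0 \<le> D b"
    and mass: "(\<Sum>a\<in>Ap. C a) = (\<Sum>b\<in>Am. D b)"
    and bary: "(\<Sum>a\<in>Ap. C a *\<^sub>R a) = (\<Sum>b\<in>Am. D b *\<^sub>R b)"
  shows "\<exists>\<pi>. (\<forall>a\<in>Ap. \<forall>b\<in>Am. 0 \<le> \<pi> (a,b)) \<and> (\<forall>a\<in>Ap. (\<Sum>b\<in>Am. \<pi> (a,b)) = C a)
     \<and> (\<forall>b\<in>Am. (\<Sum>a\<in>Ap. \<pi> (a,b)) = D b)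
     \<and> (\<forall>b\<in>Am. (\<Sum>a\<in>Ap. \<pi> (a,b) *\<^sub>R a) = D b *\<^sub>R b)"
proof (rule ccontr)
  assume contra: "\<not> ?thesis"
  define V where "V = Ap \<times> Am"
  define E :: "(real^'n + real^'n + (real^'n) \<times> 'n) set"
    where "E = Inl ` Ap \<union> Inr ` (Inl ` Am \<union> Inr ` (Am \<times> UNIV))"
  define M where "M e p = (case e of Inl a' \<Rightarrow> (if fst p = a' then 1 else 0)
     | Inr (Inl b') \<Rightarrow> (if snd p = b' then 1 else 0)
     | Inr (Inr (b',i)) \<Rightarrow> (if snd p = b' then (fst p) $ i else 0))"
    for e :: "real^'n + real^'n + (real^'n) \<times> 'n" and p :: "(real^'n) \<times> (real^'n)"
  define t where "t e = (case e of Inl a' \<Rightarrow> C a' | Inr (Inl b') \<Rightarrow> D b'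
     | Inr (Inr (b',i)) \<Rightarrow> D b' * b' $ i)"
    for e :: "real^'n + real^'n + (real^'n) \<times> 'n"
  have finV: "finite V" using fin by (simp add: V_def)
  have finE: "finite E" using fin by (simp add: E_def)
  have splitE: "(\<Sum>e\<in>E. F e) = (\<Sum>a\<in>Ap. F (Inl a)) + (\<Sum>b\<in>Am. F (Inr (Inl b))) + (\<Sum>b\<in>Am. \<Sum>i\<in>UNIV. F (Inr (Inr (b,i))))"
    for F :: "real^'n + real^'n + (real^'n) \<times> 'n \<Rightarrow> real"
  proof -
    have "(\<Sum>e\<in>E. F e) = (\<Sum>r\<in>Inl ` Ap. F r) + (\<Sum>r\<in>Inr ` (Inl ` Am \<union> Inr ` (Am \<times> UNIV)). F r)"
      unfolding E_def using fin by (intro sum.union_disjoint) auto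
    also have "(\<Sum>r\<in>Inr ` (Inl ` Am \<union> Inr ` (Am \<times> UNIV)). F r) = (\<Sum>r\<in>Inl ` Am \<union> Inr ` (Am \<times> UNIV). F (Inr r))"
      by (simp add: sum.reindex)
    also have "\<dots> = (\<Sum>r\<in>Inl ` Am. F (Inr r)) + (\<Sum>r\<in>Inr ` (Am \<times> UNIV). F (Inr r))"
      using fin by (intro sum.union_disjoint) auto
    finally show ?thesis by (simp add: sum.reindex add.assoc sum.cartesian_product)
  qed
  have "\<not> (\<exists>x. (\<forall>v\<in>V. 0 \<le> x v) \<and> (\<forall>e\<in>E. (\<Sum>v\<in>V. M e v * x v) = t e))"
  proof
    assume "\<exists>x. (\<forall>v\<in>V. 0 \<le> x v) \<and> (\<forall>e\<in>E. (\<Sum>v\<in>V. M e v * x v) = t e)"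
    then obtain x where x0: "\<forall>v\<in>V. 0 \<le> x v" and xe: "\<forall>e\<in>E. (\<Sum>v\<in>V. M e v * x v) = t e" by blast
    have row: "(\<Sum>b\<in>Am. x (a,b)) = C a" if a: "a \<in> Ap" for a
    proof -
      have "(\<Sum>v\<in>V. M (Inl a) v * x v) = (\<Sum>a'\<in>Ap. \<Sum>b\<in>Am. (if a' = a then 1 else 0) * x (a',b))"
        by (simp add: V_def M_def sum.cartesian_product split_def)
      also have "\<dots> = (\<Sum>a'\<in>Ap. if a' = a then (\<Sum>b\<in>Am. x (a',b)) else 0)"
        by (rule sum.cong) auto
      also have "\<dots> = (\<Sum>b\<in>Am. x (a,b))" using a fin by simp
      finally show ?thesis using xe a by (simp add: E_def t_def)
    qed
    have bar: "(\<Sum>a\<in>Ap. x (a,b) *\<^sub>R a) = D b *\<^sub>R b" if b: "b \<in> Am" for b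
    proof (rule vec_eq_iff[THEN iffD2], rule allI)
      fix i
      have "(\<Sum>v\<in>V. M (Inr (Inr (b,i))) v * x v) = (\<Sum>a\<in>Ap. \<Sum>b'\<in>Am. (if b' = b then a $ i else 0) * x (a,b'))"
        by (simp add: V_def M_def sum.cartesian_product split_def) (intro sum.cong; simp)
      also have "\<dots> = (\<Sum>a\<in>Ap. \<Sum>b'\<in>Am. if b' = b then a $ i * x (a,b') else 0)"
        by (intro sum.cong) auto
      also have "\<dots> = (\<Sum>a\<in>Ap. x (a,b) * a $ i)" using b fin by (simp add: mult.commute)
      finally have "(\<Sum>a\<in>Ap. x (a,b) * a $ i) = D b * b $ i"
        using xe b by (simp add: E_def t_def)
      then show "(\<Sum>a\<in>Ap. x (a,b) *\<^sub>R a) $ i = (D b *\<^sub>R b) $ i" by simp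
    qed
    have col: "(\<Sum>a\<in>Ap. x (a,b)) = D b" if b: "b \<in> Am" for b
    proof -
      have "(\<Sum>v\<in>V. M (Inr (Inl b)) v * x v) = (\<Sum>a\<in>Ap. \<Sum>b'\<in>Am. (if b' = b then 1 else 0) * x (a,b'))"
        by (simp add: V_def M_def sum.cartesian_product split_def)
      also have "\<dots> = (\<Sum>a\<in>Ap. \<Sum>b'\<in>Am. if b' = b then x (a,b') else 0)"
        by (intro sum.cong) auto
      also have "\<dots> = (\<Sum>a\<in>Ap. x (a,b))" using b fin by simp
      finally show ?thesis using xe b by (simp add: E_def t_def)
    qed
    have "\<exists>\<pi>. (\<forall>a\<in>Ap. \<forall>b\<in>Am. 0 \<le> \<pi> (a,b)) \<and> (\<forall>a\<in>Ap. (\<Sum>b\<in>Am. \<pi> (a,b)) = C a)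
     \<and> (\<forall>b\<in>Am. (\<Sum>a\<in>Ap. \<pi> (a,b)) = D b)
     \<and> (\<forall>b\<in>Am. (\<Sum>a\<in>Ap. \<pi> (a,b) *\<^sub>R a) = D b *\<^sub>R b)"
      using x0 row col bar by (intro exI[of _ x]) (auto simp: V_def)
    with contra show False by blast
  qed
  from farkas_eq[OF finV finE this] obtain z where
    z1: "\<forall>v\<in>V. 0 \<le> (\<Sum>e\<in>E. z e * M e v)" and z2: "(\<Sum>e\<in>E. z e * t e) < 0" by blast
  define h where "h a = z (Inl a)" for a
  define g where "g b = z (Inr (Inl b))" for b
  define wb where "wb b = (\<chi> i. z (Inr (Inr (b,i))))" for b
  have dual1: "- (g b + wb b \<bullet> a) \<le> h a" if a: "a \<in> Ap" and b: "b \<in> Am" for a b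
  proof -
    have "(\<Sum>e\<in>E. z e * M e (a,b)) = h a + g b + wb b \<bullet> a"
    proof -
      have s1: "(\<Sum>a'\<in>Ap. z (Inl a') * M (Inl a') (a,b)) = h a"
      proof -
        have "(\<Sum>a'\<in>Ap. z (Inl a') * M (Inl a') (a,b)) = (\<Sum>a'\<in>Ap. if a = a' then z (Inl a') else 0)"
          by (rule sum.cong) (auto simp: M_def)
        then show ?thesis using a fin by (simp add: h_def)
      qed
      have s2: "(\<Sum>b'\<in>Am. z (Inr (Inl b')) * M (Inr (Inl b')) (a,b)) = g b"
      proof -
        have "(\<Sum>b'\<in>Am. z (Inr (Inl b')) * M (Inr (Inl b')) (a,b)) = (\<Sum>b'\<in>Am. if b = b' then z (Inr (Inl b')) else 0)"
          by (rule sum.cong) (auto simp: M_def)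
        then show ?thesis using b fin by (simp add: g_def)
      qed
      have s3: "(\<Sum>b'\<in>Am. \<Sum>i\<in>UNIV. z (Inr (Inr (b',i))) * M (Inr (Inr (b',i))) (a,b)) = wb b \<bullet> a"
      proof -
        have "(\<Sum>b'\<in>Am. \<Sum>i\<in>UNIV. z (Inr (Inr (b',i))) * M (Inr (Inr (b',i))) (a,b))
            = (\<Sum>b'\<in>Am. if b = b' then (\<Sum>i\<in>UNIV. z (Inr (Inr (b',i))) * a $ i) else 0)"
          by (rule sum.cong) (auto simp: M_def)
        then show ?thesis using b fin by (simp add: wb_def inner_vec_def)
      qed
      show ?thesis by (simp add: splitE s1 s2 s3)
    qed
    moreover have "0 \<le> (\<Sum>e\<in>E. z e * M e (a,b))" using z1 a b by (auto simp: V_def)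
    ultimately show ?thesis by linarith
  qed
  have dual2: "(\<Sum>a\<in>Ap. h a * C a) + (\<Sum>b\<in>Am. (g b + wb b \<bullet> b) * D b) < 0"
  proof -
    have "(\<Sum>b\<in>Am. \<Sum>i\<in>UNIV. z (Inr (Inr (b,i))) * t (Inr (Inr (b,i)))) = (\<Sum>b\<in>Am. (wb b \<bullet> b) * D b)"
    proof (rule sum.cong[OF refl])
      fix b assume "b \<in> Am"
      have "(\<Sum>i\<in>UNIV. z (Inr (Inr (b,i))) * t (Inr (Inr (b,i)))) = (\<Sum>i\<in>UNIV. (z (Inr (Inr (b,i))) * b$i) * D b)"
        by (simp add: t_def mult_ac)
      also have "\<dots> = (wb b \<bullet> b) * D b" by (simp add: wb_def inner_vec_def sum_distrib_right)
      finally show "(\<Sum>i\<in>UNIV. z (Inr (Inr (b,i))) * t (Inr (Inr (b,i)))) = (wb b \<bullet> b) * D b" .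
    qed
    moreover have "(\<Sum>e\<in>E. z e * t e) = (\<Sum>a\<in>Ap. z (Inl a) * t (Inl a)) + (\<Sum>b\<in>Am. z (Inr (Inl b)) * t (Inr (Inl b)))
       + (\<Sum>b\<in>Am. \<Sum>i\<in>UNIV. z (Inr (Inr (b,i))) * t (Inr (Inr (b,i))))" by (rule splitE)
    moreover have "(\<Sum>b\<in>Am. (g b + wb b \<bullet> b) * D b) = (\<Sum>b\<in>Am. z (Inr (Inl b)) * t (Inr (Inl b))) + (\<Sum>b\<in>Am. (wb b \<bullet> b) * D b)"
      by (simp add: g_def t_def distrib_right sum.distrib)
    moreover have "(\<Sum>a\<in>Ap. h a * C a) = (\<Sum>a\<in>Ap. z (Inl a) * t (Inl a))" by (simp add: h_def t_def)
    ultimately show ?thesis using z2 by linarith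
  qed
  obtain w c where wc: "\<forall>a\<in>Ap. w \<bullet> a + c \<le> h a" and hullK: "Am \<subseteq> convex hull {a\<in>Ap. w \<bullet> a + c = h a}"
    using spec[OF NS, of h] by (elim exE conjE) 
  have bnd: "- (g b + wb b \<bullet> b) \<le> w \<bullet> b + c" if b: "b \<in> Am" for b
  proof (rule hull_affine_bound[of "{a\<in>Ap. w \<bullet> a + c = h a}"])
    show "finite {a\<in>Ap. w \<bullet> a + c = h a}" using fin(1) by simp
    show "b \<in> convex hull {a\<in>Ap. w \<bullet> a + c = h a}" using hullK b by (rule subsetD)
    fix a assume "a \<in> {a\<in>Ap. w \<bullet> a + c = h a}"
    then show "- (g b + wb b \<bullet> a) \<le> w \<bullet> a + c" using dual1[of a b] b by simp
  qed
  have "(\<Sum>b\<in>Am. (- (g b + wb b \<bullet> b)) * D b) \<le> (\<Sum>b\<in>Am. (w \<bullet> b + c) * D b)"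
    using bnd Dpos by (intro sum_mono mult_right_mono) auto
  also have "\<dots> = (\<Sum>b\<in>Am. D b * (w \<bullet> b) + c * D b)"
    by (intro sum.cong) (auto simp: algebra_simps)
  also have "\<dots> = w \<bullet> (\<Sum>b\<in>Am. D b *\<^sub>R b) + c * (\<Sum>b\<in>Am. D b)"
    by (simp add: inner_sum_right sum.distrib sum_distrib_left)
  also have "\<dots> = w \<bullet> (\<Sum>a\<in>Ap. C a *\<^sub>R a) + c * (\<Sum>a\<in>Ap. C a)" by (simp add: mass bary)
  also have "\<dots> = (\<Sum>a\<in>Ap. C a * (w \<bullet> a) + c * C a)"
    by (simp add: inner_sum_right sum.distrib sum_distrib_left)
  also have "\<dots> = (\<Sum>a\<in>Ap. (w \<bullet> a + c) * C a)"
    by (intro sum.cong) (auto simp: algebra_simps)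
  also have "\<dots> \<le> (\<Sum>a\<in>Ap. h a * C a)"
    using wc Cpos by (intro sum_mono mult_right_mono) auto
  finally have "(\<Sum>b\<in>Am. (- (g b + wb b \<bullet> b)) * D b) \<le> (\<Sum>a\<in>Ap. h a * C a)" .
  moreover have "(\<Sum>b\<in>Am. (- (g b + wb b \<bullet> b)) * D b) = - (\<Sum>b\<in>Am. (g b + wb b \<bullet> b) * D b)"
    by (simp only: mult_minus_left sum_negf)
  ultimately show False using dual2 by linarith
qed

definition expv :: "real^'n \<Rightarrow> real^'n" where "expv u = (\<chi> i. exp (u $ i))"
definition lnv :: "real^'n \<Rightarrow> real^'n" where "lnv x = (\<chi> i. ln (x $ i))"

lemma expv_pos: "expv u \<in> pos_orthant"
  by (simp add: expv_def pos_orthant_def)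

lemma expv_lnv: "x \<in> pos_orthant \<Longrightarrow> expv (lnv x) = x"
  by (simp add: expv_def lnv_def pos_orthant_def vec_eq_iff)

lemma monom_expv: "monom a (expv u) = exp (a \<bullet> u)"
proof -
  have "monom a (expv u) = (\<Prod>i\<in>UNIV. exp (a $ i * u $ i))"
    unfolding monom_def expv_def by (simp add: powr_def)
  also have "\<dots> = exp (\<Sum>i\<in>UNIV. a $ i * u $ i)" by (simp add: exp_sum)
  finally show ?thesis by (simp add: inner_vec_def)
qed

lemma monom_pos: "x \<in> pos_orthant \<Longrightarrow> monom a x = exp (a \<bullet> lnv x)"
  by (metis expv_lnv monom_expv)

lemma SONC_cong: "SONC g \<Longrightarrow> (\<And>x. x \<in> pos_orthant \<Longrightarrow> f x = g x) \<Longrightarrow> SONC f"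
  unfolding SONC_def by metis

lemma SONC_zero: "SONC (\<lambda>x. 0)"
  unfolding SONC_def by (rule exI[of _ "[]"]) simp

lemma SONC_add: "SONC f \<Longrightarrow> SONC g \<Longrightarrow> SONC (\<lambda>x. f x + g x)"
  unfolding SONC_def
proof (elim exE conjE)
  fix fs gs
  assume "\<forall>g\<in>set fs. circuit_signomial g \<and> copositive g" "\<forall>x\<in>pos_orthant. f x = (\<Sum>g\<leftarrow>fs. g x)"
    "\<forall>g\<in>set gs. circuit_signomial g \<and> copositive g" "\<forall>x\<in>pos_orthant. g x = (\<Sum>g\<leftarrow>gs. g x)"
  then show "\<exists>hs. (\<forall>g\<in>set hs. circuit_signomial g \<and> copositive g) \<and> (\<forall>x\<in>pos_orthant. f x + g x = (\<Sum>g\<leftarrow>hs. g x))"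
    by (intro exI[of _ "fs @ gs"]) auto
qed

lemma SONC_sum: "finite I \<Longrightarrow> (\<And>i. i \<in> I \<Longrightarrow> SONC (f i)) \<Longrightarrow> SONC (\<lambda>x. \<Sum>i\<in>I. f i x)"
proof (induction I rule: finite_induct)
  case empty then show ?case by (simp add: SONC_zero)
next
  case (insert i I)
  then show ?case using SONC_add[of "f i" "\<lambda>x. \<Sum>i\<in>I. f i x"] by simp
qed

lemma SONC_single: "circuit_signomial g \<Longrightarrow> copositive g \<Longrightarrow> SONC g"
  unfolding SONC_def by (intro exI[of _ "[g]"]) simp

lemma SONC_copositive:
  fixes f :: "real^'n \<Rightarrow> real"
  assumes "SONC f" shows "copositive f"
proof -
  obtain gs where gs: "\<forall>g\<in>set gs. circuit_signomial g \<and> copositive g"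
    and eq: "\<forall>x\<in>pos_orthant. f x = (\<Sum>g\<leftarrow>gs. g x)"
    using assms unfolding SONC_def by blast
  have "0 \<le> f x" if x: "x \<in> pos_orthant" for x
  proof -
    have "0 \<le> (\<Sum>g\<leftarrow>gs. g x)"
      using gs x by (intro sum_list_nonneg) (auto simp: copositive_def)
    then show ?thesis using eq x by simp
  qed
  then show ?thesis unfolding copositive_def by blast
qed

lemma SONC_monomial:
  assumes "0 \<le> c"
  shows "SONC (\<lambda>x. c * monom a x)"
proof (cases "c = 0")
  case True then show ?thesis by (simp add: SONC_zero)
next
  case False
  then have c: "0 < c" using assms by simp
  have circ: "circuit {a} {}" by (simp add: circuit_def signed_support_def)
  have sig: "(\<lambda>x. c * monom a x) \<in> signomials {a} {}"
    unfolding signomials_def using c by (intro CollectI exI[of _ "\<lambda>_. c"]) auto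
  have cop: "copositive (\<lambda>x. c * monom a x)"
    unfolding copositive_def using c by (auto simp: monom_pos)
  show ?thesis using circ sig cop by (intro SONC_single) (auto simp: circuit_signomial_def)
qed

lemma circuit_piece:
  fixes T :: "(real^'n) set" and b z :: "real^'n" and \<mu> :: "real^'n \<Rightarrow> real"
  assumes fin: "finite T" and ne: "T \<noteq> {}" and bT: "b \<notin> T" and ind: "\<not> affine_dependent T"
    and pos: "\<forall>a\<in>T. 0 < \<mu> a" and bar: "(\<Sum>a\<in>T. \<mu> a *\<^sub>R (a - b)) = 0"
  shows "SONC (\<lambda>x. (\<Sum>a\<in>T. \<mu> a * exp (a \<bullet> z) * monom a x) - (\<Sum>a\<in>T. \<mu> a) * exp (b \<bullet> z) * monom b x)"
proof -
  define M where "M = (\<Sum>a\<in>T. \<mu> a)"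
  have Mpos: "0 < M" unfolding M_def using fin ne pos by (intro sum_pos) auto
  have bary: "(\<Sum>a\<in>T. \<mu> a *\<^sub>R a) = M *\<^sub>R b"
  proof -
    have "(\<Sum>a\<in>T. \<mu> a *\<^sub>R (a - b)) = (\<Sum>a\<in>T. \<mu> a *\<^sub>R a) - M *\<^sub>R b"
      by (simp add: M_def scaleR_diff_right sum_subtractf scaleR_sum_left)
    then show ?thesis using bar by simp
  qed
  define l where "l a = \<mu> a / M" for a
  have l_pos: "\<forall>a\<in>T. 0 < l a" using pos Mpos by (simp add: l_def)
  have l_sum: "sum l T = 1" using Mpos by (simp add: l_def M_def flip: sum_divide_distrib)
  have l_bar: "(\<Sum>a\<in>T. l a *\<^sub>R a) = b"
  proof -
    have "(\<Sum>a\<in>T. l a *\<^sub>R a) = (1/M) *\<^sub>R (\<Sum>a\<in>T. \<mu> a *\<^sub>R a)"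
      by (simp add: l_def scaleR_sum_right)
    then show ?thesis using bary Mpos by simp
  qed
  have brel: "b \<in> rel_interior (convex hull T)"
    unfolding rel_interior_convex_hull_explicit[OF ind] using l_pos l_sum l_bar by blast
  have bhull: "b \<in> convex hull T" using brel rel_interior_subset by blast
  have hulleq: "convex hull (T \<union> {b}) = convex hull T"
    using hull_redundant[OF bhull] by simp
  have circ: "circuit T {b}"
    unfolding circuit_def signed_support_def
  proof (intro conjI disjI2)
    show "finite T" "finite {b}" "T \<inter> {b} = {}" using fin bT by auto
    show "\<exists>k. k simplex convex hull (T \<union> {b})"
      unfolding hulleq simplex_def using ind by (intro exI[of _ "int (card T) - 1"] exI[of _ T]) auto
    show "{v. v extreme_point_of convex hull (T \<union> {b})} = T"
      unfolding hulleq using extreme_point_of_convex_hull_affine_independent[OF ind] by auto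
    show "card {b} = 1" by simp
    show "{b} \<subseteq> rel_interior (convex hull T)" using brel by simp
  qed
  define g where "g = (\<lambda>x. (\<Sum>a\<in>T. \<mu> a * exp (a \<bullet> z) * monom a x) - M * exp (b \<bullet> z) * monom b x)"
  define c' where "c' a = (if a = b then M * exp (b \<bullet> z) else \<mu> a * exp (a \<bullet> z))" for a
  have sig: "g \<in> signomials T {b}"
    unfolding signomials_def
  proof (intro CollectI exI[of _ c'] conjI)
    show "\<forall>a\<in>T \<union> {b}. 0 < c' a" using pos Mpos by (auto simp: c'_def)
    have "(\<Sum>a\<in>T. c' a * monom a x) = (\<Sum>a\<in>T. \<mu> a * exp (a \<bullet> z) * monom a x)" for x
      using bT by (intro sum.cong) (auto simp: c'_def)
    then show "g = (\<lambda>x. (\<Sum>a\<in>T. c' a * monom a x) - (\<Sum>b\<in>{b}. c' b * monom b x))"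
      by (simp add: g_def c'_def)
  qed
  have cop: "copositive g"
    unfolding copositive_def
  proof
    fix x :: "real^'n" assume x: "x \<in> pos_orthant"
    define v where "v = z + lnv x"
    have ex: "exp (a \<bullet> z) * monom a x = exp (a \<bullet> v)" for a
      using x by (simp add: monom_pos v_def inner_add_right exp_add)
    have "exp (\<Sum>a\<in>T. l a *\<^sub>R (a \<bullet> v)) \<le> (\<Sum>a\<in>T. l a * exp (a \<bullet> v))"
      using fin ne l_sum l_pos by (intro convex_on_sum[OF _ _ exp_convex]) auto
    moreover have "(\<Sum>a\<in>T. l a *\<^sub>R (a \<bullet> v)) = b \<bullet> v"
      by (simp add: inner_sum_left flip: l_bar)
    ultimately have "exp (b \<bullet> v) \<le> (\<Sum>a\<in>T. l a * exp (a \<bullet> v))" by simp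
    then have "M * exp (b \<bullet> v) \<le> M * (\<Sum>a\<in>T. l a * exp (a \<bullet> v))"
      using Mpos by simp
    also have "\<dots> = (\<Sum>a\<in>T. \<mu> a * exp (a \<bullet> v))"
      using Mpos by (simp add: sum_distrib_left l_def)
    finally have "M * exp (b \<bullet> v) \<le> (\<Sum>a\<in>T. \<mu> a * exp (a \<bullet> v))" .
    moreover have "g x = (\<Sum>a\<in>T. \<mu> a * exp (a \<bullet> v)) - M * exp (b \<bullet> v)"
      unfolding g_def by (simp add: mult.assoc ex)
    ultimately show "0 \<le> g x" by simp
  qed
  have "SONC g" using circ sig cop by (intro SONC_single) (auto simp: circuit_signomial_def)
  then show ?thesis by (simp add: g_def M_def)
qed

lemma dec:
  fixes S :: "(real^'n) set" and b z :: "real^'n"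
  assumes fin: "finite S" and bS: "b \<notin> S"
  shows "\<forall>a\<in>S. 0 \<le> \<mu> a \<Longrightarrow> (\<Sum>a\<in>S. \<mu> a *\<^sub>R (a - b)) = 0 \<Longrightarrow>
    SONC (\<lambda>x. (\<Sum>a\<in>S. \<mu> a * exp (a \<bullet> z) * monom a x) - (\<Sum>a\<in>S. \<mu> a) * exp (b \<bullet> z) * monom b x)"
proof (induction "card {a\<in>S. 0 < \<mu> a}" arbitrary: \<mu> rule: less_induct)
  case less
  note nonneg = less.prems(1) and barS = less.prems(2)
  define T where "T = {a\<in>S. 0 < \<mu> a}"
  have finT: "finite T" "T \<subseteq> S" using fin by (auto simp: T_def)
  have zero: "\<mu> a = 0" if "a \<in> S" "a \<notin> T" for a
    using that nonneg by (force simp: T_def)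
  have red: "(\<Sum>a\<in>S. \<mu> a * F a) = (\<Sum>a\<in>T. \<mu> a * F a)" for F :: "real^'n \<Rightarrow> real"
    by (rule sum.mono_neutral_right[OF fin finT(2)]) (auto simp: zero)
  have redv: "(\<Sum>a\<in>S. \<mu> a *\<^sub>R F a) = (\<Sum>a\<in>T. \<mu> a *\<^sub>R F a)" for F :: "real^'n \<Rightarrow> real^'n"
    by (rule sum.mono_neutral_right[OF fin finT(2)]) (auto simp: zero)
  have redm: "(\<Sum>a\<in>S. \<mu> a * exp (a \<bullet> z) * monom a x) = (\<Sum>a\<in>T. \<mu> a * exp (a \<bullet> z) * monom a x)" for x
    by (rule sum.mono_neutral_right[OF fin finT(2)]) (auto simp: zero)
  have red1: "(\<Sum>a\<in>S. \<mu> a) = (\<Sum>a\<in>T. \<mu> a)"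
    using red[of "\<lambda>_. 1"] by simp
  show ?case
  proof (cases "T = {}")
    case True
    show ?thesis
      by (rule SONC_cong[OF SONC_zero]) (simp add: redm red1 True)
  next
    case Tne: False
    show ?thesis
    proof (cases "affine_dependent T")
      case False
      have "SONC (\<lambda>x. (\<Sum>a\<in>T. \<mu> a * exp (a \<bullet> z) * monom a x) - (\<Sum>a\<in>T. \<mu> a) * exp (b \<bullet> z) * monom b x)"
        using finT Tne bS False barS
        by (intro circuit_piece) (auto simp: T_def redv)
      then show ?thesis
        by (rule SONC_cong) (simp add: redm red1)
    next
      case True
      then obtain U where U: "sum U T = 0" "\<exists>v\<in>T. U v \<noteq> 0" "(\<Sum>v\<in>T. U v *\<^sub>R v) = 0"
        using affine_dependent_explicit_finite[OF finT(1)] by blast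
      define Ng where "Ng = {a\<in>T. U a < 0}"
      define Ps where "Ps = {a\<in>T. 0 < U a}"
      have finNP: "finite Ng" "finite Ps" using finT by (auto simp: Ng_def Ps_def)
      have NPne: "Ng \<noteq> {} \<and> Ps \<noteq> {}"
      proof (rule ccontr)
        assume "\<not> (Ng \<noteq> {} \<and> Ps \<noteq> {})"
        then have "(\<forall>a\<in>T. 0 \<le> U a) \<or> (\<forall>a\<in>T. U a \<le> 0)"
          by (auto simp: Ng_def Ps_def not_less)
        then have "\<forall>a\<in>T. U a = 0"
        proof
          assume h: "\<forall>a\<in>T. 0 \<le> U a"
          then show ?thesis using sum_nonneg_eq_0_iff[OF finT(1)] U(1) by blast
        next
          assume h: "\<forall>a\<in>T. U a \<le> 0"
          have "sum (\<lambda>a. - U a) T = 0" using U(1) by (simp add: sum_negf)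
          then show ?thesis using sum_nonneg_eq_0_iff[OF finT(1), of "\<lambda>a. - U a"] h by auto
        qed
        then show False using U(2) by blast
      qed
      define s1 where "s1 = Min ((\<lambda>a. \<mu> a / (- U a)) ` Ng)"
      define s2 where "s2 = Min ((\<lambda>a. \<mu> a / U a) ` Ps)"
      have "s1 \<in> (\<lambda>a. \<mu> a / (- U a)) ` Ng" unfolding s1_def using finNP NPne by (intro Min_in) auto
      then obtain a1 where a1: "a1 \<in> Ng" "s1 = \<mu> a1 / (- U a1)" by blast
      have "s2 \<in> (\<lambda>a. \<mu> a / U a) ` Ps" unfolding s2_def using finNP NPne by (intro Min_in) auto
      then obtain a2 where a2: "a2 \<in> Ps" "s2 = \<mu> a2 / U a2" by blast
      have s1le: "s1 \<le> \<mu> a / (- U a)" if "a \<in> Ng" for a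
        unfolding s1_def using finNP that by (intro Min_le) blast+
      have s2le: "s2 \<le> \<mu> a / U a" if "a \<in> Ps" for a
        unfolding s2_def using finNP that by (intro Min_le) blast+
      have s1pos: "0 < s1" using a1 by (simp add: Ng_def T_def divide_pos_neg)
      have s2pos: "0 < s2" using a2 by (simp add: Ps_def T_def)
      define U' where "U' a = (if a \<in> T then U a else 0)" for a
      define c1 where "c1 = s2 / (s1 + s2)"
      define c2 where "c2 = s1 / (s1 + s2)"
      define \<nu>1 where "\<nu>1 a = c1 * (\<mu> a + s1 * U' a)" for a
      define \<nu>2 where "\<nu>2 a = c2 * (\<mu> a - s2 * U' a)" for a
      have c12: "0 < c1" "0 < c2" using s1pos s2pos by (auto simp: c1_def c2_def)
      have musplit: "\<mu> a = \<nu>1 a + \<nu>2 a" for a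
      proof -
        have ne0: "s1 + s2 \<noteq> 0" using s1pos s2pos by simp
        have "c1 + c2 = (s2 + s1) / (s1 + s2)" by (simp add: c1_def c2_def add_divide_distrib)
        then have "c1 + c2 = 1" using ne0 by (simp add: add.commute)
        moreover have "c1 * s1 = c2 * s2" by (simp add: c1_def c2_def)
        moreover have "\<nu>1 a + \<nu>2 a = (c1 + c2) * \<mu> a + (c1 * s1 - c2 * s2) * U' a"
          unfolding \<nu>1_def \<nu>2_def by (simp add: algebra_simps)
        ultimately show ?thesis by simp
      qed
      have n1: "0 \<le> \<mu> a + s1 * U' a" if "a \<in> S" for a
      proof (cases "a \<in> T \<and> U a < 0")
        case True
        then have "a \<in> Ng" by (simp add: Ng_def)
        from s1le[OF this] True have "s1 * (- U a) \<le> \<mu> a" by (simp add: field_simps)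
        then show ?thesis using True by (simp add: U'_def algebra_simps)
      next
        case False then show ?thesis using nonneg that s1pos
          by (auto simp: U'_def not_less intro: add_nonneg_nonneg mult_nonneg_nonneg)
      qed
      have n2: "0 \<le> \<mu> a - s2 * U' a" if "a \<in> S" for a
      proof (cases "a \<in> T \<and> 0 < U a")
        case True
        then have "a \<in> Ps" by (simp add: Ps_def)
        from s2le[OF this] True have "s2 * U a \<le> \<mu> a" by (simp add: field_simps)
        then show ?thesis using True by (simp add: U'_def algebra_simps)
      next
        case False
        then have "s2 * U' a \<le> 0" using s2pos by (auto simp: U'_def not_less mult_nonneg_nonpos)
        then show ?thesis using nonneg that by auto
      qed
      have nu1_nonneg: "\<forall>a\<in>S. 0 \<le> \<nu>1 a" using n1 c12 by (simp add: \<nu>1_def)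
      have nu2_nonneg: "\<forall>a\<in>S. 0 \<le> \<nu>2 a" using n2 c12 by (simp add: \<nu>2_def)
      have a1z: "\<nu>1 a1 = 0"
        using a1 by (simp add: \<nu>1_def U'_def Ng_def field_simps)
      have a2z: "\<nu>2 a2 = 0"
        using a2 by (simp add: \<nu>2_def U'_def Ps_def field_simps)
      have sub1: "{a\<in>S. 0 < \<nu>1 a} \<subseteq> T - {a1}"
      proof
        fix a assume "a \<in> {a\<in>S. 0 < \<nu>1 a}"
        then have a: "a \<in> S" "0 < \<nu>1 a" by auto
        have "a \<in> T"
        proof (rule ccontr)
          assume "a \<notin> T"
          then have "\<mu> a = 0" "U' a = 0" using zero a by (auto simp: U'_def)
          then have "\<nu>1 a = 0" by (simp add: \<nu>1_def)
          with a show False by simp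
        qed
        then show "a \<in> T - {a1}" using a a1z by auto
      qed
      have sub2: "{a\<in>S. 0 < \<nu>2 a} \<subseteq> T - {a2}"
      proof
        fix a assume "a \<in> {a\<in>S. 0 < \<nu>2 a}"
        then have a: "a \<in> S" "0 < \<nu>2 a" by auto
        have "a \<in> T"
        proof (rule ccontr)
          assume "a \<notin> T"
          then have "\<mu> a = 0" "U' a = 0" using zero a by (auto simp: U'_def)
          then have "\<nu>2 a = 0" by (simp add: \<nu>2_def)
          with a show False by simp
        qed
        then show "a \<in> T - {a2}" using a a2z by auto
      qed
      have a1T: "a1 \<in> T" "a2 \<in> T" using a1 a2 by (auto simp: Ng_def Ps_def)
      have card1: "card {a\<in>S. 0 < \<nu>1 a} < card T"
        using le_less_trans[OF card_mono[OF finite_Diff[OF finT(1)] sub1] card_Diff1_less[OF finT(1) a1T(1)]] .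
      have card2: "card {a\<in>S. 0 < \<nu>2 a} < card T"
        using le_less_trans[OF card_mono[OF finite_Diff[OF finT(1)] sub2] card_Diff1_less[OF finT(1) a1T(2)]] .
      have Ubar: "(\<Sum>a\<in>S. U' a *\<^sub>R (a - b)) = 0"
      proof -
        have "(\<Sum>a\<in>S. U' a *\<^sub>R (a - b)) = (\<Sum>a\<in>T. U a *\<^sub>R (a - b))"
          using finT fin by (intro sum.mono_neutral_cong_right) (auto simp: U'_def)
        also have "\<dots> = (\<Sum>a\<in>T. U a *\<^sub>R a) - (sum U T) *\<^sub>R b"
          by (simp add: scaleR_diff_right sum_subtractf scaleR_sum_left)
        finally show ?thesis using U by simp
      qed
      have bar1: "(\<Sum>a\<in>S. \<nu>1 a *\<^sub>R (a - b)) = 0"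
      proof -
        have "(\<Sum>a\<in>S. \<nu>1 a *\<^sub>R (a - b)) = c1 *\<^sub>R ((\<Sum>a\<in>S. \<mu> a *\<^sub>R (a - b)) + s1 *\<^sub>R (\<Sum>a\<in>S. U' a *\<^sub>R (a - b)))"
          by (simp add: \<nu>1_def scaleR_sum_right sum.distrib scaleR_add_left scaleR_add_right distrib_left)
        then show ?thesis using barS Ubar by simp
      qed
      have bar2: "(\<Sum>a\<in>S. \<nu>2 a *\<^sub>R (a - b)) = 0"
      proof -
        have "(\<Sum>a\<in>S. \<nu>2 a *\<^sub>R (a - b)) = c2 *\<^sub>R ((\<Sum>a\<in>S. \<mu> a *\<^sub>R (a - b)) - s2 *\<^sub>R (\<Sum>a\<in>S. U' a *\<^sub>R (a - b)))"
          by (simp add: \<nu>2_def scaleR_sum_right sum_subtractf scaleR_diff_left scaleR_diff_right right_diff_distrib)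
        then show ?thesis using barS Ubar by simp
      qed
      have IH1: "SONC (\<lambda>x. (\<Sum>a\<in>S. \<nu>1 a * exp (a \<bullet> z) * monom a x) - (\<Sum>a\<in>S. \<nu>1 a) * exp (b \<bullet> z) * monom b x)"
        using less.hyps[OF card1[unfolded T_def]] nu1_nonneg bar1 by blast
      have IH2: "SONC (\<lambda>x. (\<Sum>a\<in>S. \<nu>2 a * exp (a \<bullet> z) * monom a x) - (\<Sum>a\<in>S. \<nu>2 a) * exp (b \<bullet> z) * monom b x)"
        using less.hyps[OF card2[unfolded T_def]] nu2_nonneg bar2 by blast
      show ?thesis
        by (rule SONC_cong[OF SONC_add[OF IH1 IH2]])
           (simp add: musplit distrib_right sum.distrib algebra_simps)
    qed
  qed
qed

lemma grad_zero:
  fixes Ap Am :: "(real^'n) set" and Cw Dw :: "real^'n \<Rightarrow> real"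
  assumes fin: "finite Ap" "finite Am"
    and nonneg: "\<And>v. 0 \<le> (\<Sum>a\<in>Ap. Cw a * exp (a \<bullet> v)) - (\<Sum>b\<in>Am. Dw b * exp (b \<bullet> v))"
    and zero: "(\<Sum>a\<in>Ap. Cw a) - (\<Sum>b\<in>Am. Dw b) = 0"
  shows "(\<Sum>a\<in>Ap. Cw a *\<^sub>R a) = (\<Sum>b\<in>Am. Dw b *\<^sub>R b)"
proof (rule vec_eq_iff[THEN iffD2], rule allI)
  fix i
  define \<phi> where "\<phi> t = (\<Sum>a\<in>Ap. Cw a * exp (t * a $ i)) - (\<Sum>b\<in>Am. Dw b * exp (t * b $ i))" for t
  have ax: "x \<bullet> (t *\<^sub>R axis i 1) = t * x $ i" for x :: "real^'n" and t
    by (simp add: inner_axis)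
  have phi_nonneg: "0 \<le> \<phi> t" for t
    using nonneg[of "t *\<^sub>R axis i 1"] by (simp add: \<phi>_def inner_axis)
  have phi0: "\<phi> 0 = 0" using zero by (simp add: \<phi>_def)
  have "DERIV \<phi> 0 :> (\<Sum>a\<in>Ap. Cw a * (exp (0 * a $ i) * a $ i)) - (\<Sum>b\<in>Am. Dw b * (exp (0 * b $ i) * b $ i))"
    unfolding \<phi>_def
    by (intro derivative_intros DERIV_cmult DERIV_diff DERIV_sum) (auto intro!: derivative_eq_intros)
  then have "(\<Sum>a\<in>Ap. Cw a * (exp (0 * a $ i) * a $ i)) - (\<Sum>b\<in>Am. Dw b * (exp (0 * b $ i) * b $ i)) = 0"
    by (rule DERIV_local_min[where d=1]) (use phi_nonneg phi0 in auto)
  then show "(\<Sum>a\<in>Ap. Cw a *\<^sub>R a) $ i = (\<Sum>b\<in>Am. Dw b *\<^sub>R b) $ i" by simp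
qed

lemma hull_max_inner:
  fixes Ap :: "(real^'n) set"
  assumes "y \<in> convex hull Ap"
  shows "\<exists>a\<in>Ap. y \<bullet> p \<le> a \<bullet> p"
proof (rule ccontr)
  assume "\<not> ?thesis"
  then have "Ap \<subseteq> {x. p \<bullet> x < p \<bullet> y}" by (auto simp: inner_commute not_le)
  then have "convex hull Ap \<subseteq> {x. p \<bullet> x < p \<bullet> y}"
    by (intro hull_minimal convex_halfspace_lt)
  then show False using assms by auto
qed

lemma max_ratio:
  fixes Ap Am :: "(real^'n) set" and c :: "real^'n \<Rightarrow> real"
  assumes finAp: "finite Ap" and finAm: "finite Am" and Apne: "Ap \<noteq> {}" and Amne: "Am \<noteq> {}"
    and rel: "Am \<subseteq> rel_interior (convex hull Ap)"
    and cpos: "\<forall>a\<in>Ap \<union> Am. 0 < c a"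
  defines "P \<equiv> (\<lambda>u. \<Sum>a\<in>Ap. c a * exp (a \<bullet> u))"
    and "N \<equiv> (\<lambda>u. \<Sum>b\<in>Am. c b * exp (b \<bullet> u))"
  shows "\<exists>us. \<forall>u. N u / P u \<le> N us / P us"
proof -
  have Ppos: "0 < P u" for u
    unfolding P_def using finAp Apne cpos by (intro sum_pos) auto
  have Npos: "0 < N u" for u
    unfolding N_def using finAm Amne cpos by (intro sum_pos) auto
  obtain a0 where a0: "a0 \<in> Ap" using Apne by blast
  define G where "G = (\<lambda>x. -a0 + x) ` (Ap - {a0})"
  define L where "L = span G"
  have aff: "affine hull Ap = (\<lambda>x. a0 + x) ` L"
    unfolding L_def G_def by (rule affine_hull_span2[OF a0])
  have Am_hull: "b \<in> convex hull Ap" if "b \<in> Am" for b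
    using rel that rel_interior_subset by blast
  have inL: "a - a0 \<in> L" if "a \<in> Ap \<union> Am" for a
  proof -
    have "a \<in> affine hull Ap"
      using that Am_hull convex_hull_subset_affine_hull hull_inc[of _ Ap] by blast
    then obtain l where "l \<in> L" "a = a0 + l" using aff by auto
    then show ?thesis by simp
  qed
  text \<open>invariance under orthogonal shifts\<close>
  have inv: "\<exists>p\<in>L. N u / P u = N p / P p" for u
  proof -
    obtain p q where pq: "p \<in> span G" "\<And>w. w \<in> span G \<Longrightarrow> orthogonal q w" "u = p + q"
      using orthogonal_subspace_decomp_exists[of G u] by blast
    have shift: "a \<bullet> u = a \<bullet> p + a0 \<bullet> q" if "a \<in> Ap \<union> Am" for a
    proof -
      have "orthogonal q (a - a0)" using pq(2) inL[OF that] by (simp add: L_def)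
      then have "q \<bullet> (a - a0) = 0" by (simp add: orthogonal_def)
      then have "a \<bullet> q = a0 \<bullet> q" by (simp add: inner_diff_right inner_commute)
      then show ?thesis using pq(3) by (simp add: inner_add_right)
    qed
    have "P u = P p * exp (a0 \<bullet> q)"
      unfolding P_def by (simp add: sum_distrib_right shift exp_add mult.assoc)
    moreover have "N u = N p * exp (a0 \<bullet> q)"
      unfolding N_def by (simp add: sum_distrib_right shift exp_add mult.assoc)
    ultimately have "N u / P u = N p / P p" by simp
    then show ?thesis using pq(1) by (auto simp: L_def)
  qed
  have "\<forall>b\<in>Am. \<exists>e>0. ball b e \<inter> affine hull Ap \<subseteq> convex hull Ap"
    using rel by (auto simp: mem_rel_interior_ball)
  then obtain e where e: "\<And>b. b \<in> Am \<Longrightarrow> 0 < e b \<and> ball b (e b) \<inter> affine hull Ap \<subseteq> convex hull Ap"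
    by metis
  define \<delta> where "\<delta> = Min ((\<lambda>b. e b / 2) ` Am)"
  have \<delta>pos: "0 < \<delta>" unfolding \<delta>_def using finAm Amne e by (subst Min_gr_iff) auto
  have \<delta>le: "\<delta> \<le> e b / 2" if "b \<in> Am" for b unfolding \<delta>_def using finAm that by (intro Min_le) auto
  have gap: "\<exists>a\<in>Ap. b \<bullet> p + \<delta> * norm p \<le> a \<bullet> p" if b: "b \<in> Am" and p: "p \<in> L" for b p
  proof (cases "p = 0")
    case True then show ?thesis using a0 by auto
  next
    case False
    define y where "y = b + (\<delta> / norm p) *\<^sub>R p"
    have "dist b y = \<delta>" using False \<delta>pos by (simp add: y_def dist_norm)
    then have yb: "y \<in> ball b (e b)" using \<delta>le[OF b] e[OF b] by (simp add: dist_commute)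
    have "b - a0 \<in> L" using inL b by blast
    then have "(b - a0) + (\<delta> / norm p) *\<^sub>R p \<in> L"
      unfolding L_def using p[unfolded L_def] by (intro span_add span_mul) auto
    then have "y \<in> affine hull Ap" unfolding aff y_def
      by (intro image_eqI[of _ _ "(b - a0) + (\<delta> / norm p) *\<^sub>R p"]) auto
    then have "y \<in> convex hull Ap" using yb e[OF b] by blast
    then obtain a where a: "a \<in> Ap" "y \<bullet> p \<le> a \<bullet> p" using hull_max_inner by blast
    have "y \<bullet> p = b \<bullet> p + \<delta> * norm p"
      using False by (simp add: y_def inner_add_left power2_norm_eq_inner[symmetric] power2_eq_square)
    then show ?thesis using a by auto
  qed
  define cmin where "cmin = Min (c ` Ap)"
  have cmin_pos: "0 < cmin" unfolding cmin_def using finAp Apne cpos by (subst Min_gr_iff) auto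
  have cmin_le: "cmin \<le> c a" if "a \<in> Ap" for a unfolding cmin_def using finAp that by (intro Min_le) auto
  define K where "K = (\<Sum>b\<in>Am. c b) / cmin"
  have Kpos: "0 < K" unfolding K_def using finAm Amne cpos cmin_pos by (intro divide_pos_pos sum_pos) auto
  have bound: "N p / P p \<le> K * exp (- \<delta> * norm p)" if p: "p \<in> L" for p
  proof -
    have trm: "c b * exp (b \<bullet> p) \<le> c b * (exp (- \<delta> * norm p) * (P p / cmin))" if b: "b \<in> Am" for b
    proof -
      obtain a where a: "a \<in> Ap" "b \<bullet> p + \<delta> * norm p \<le> a \<bullet> p" using gap[OF b p] by blast
      have "exp (b \<bullet> p) \<le> exp (- \<delta> * norm p) * exp (a \<bullet> p)"
        using a(2) by (simp add: exp_add[symmetric])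
      moreover have "c a * exp (a \<bullet> p) \<le> P p"
        unfolding P_def using finAp a(1) cpos
        by (intro member_le_sum[of a Ap "\<lambda>a. c a * exp (a \<bullet> p)"]) (auto intro!: mult_nonneg_nonneg less_imp_le)
      then have "cmin * exp (a \<bullet> p) \<le> P p"
        using cmin_le[OF a(1)] by (meson exp_ge_zero mult_right_mono order_trans)
      then have "exp (a \<bullet> p) \<le> P p / cmin" using cmin_pos by (simp add: field_simps)
      ultimately have "exp (b \<bullet> p) \<le> exp (- \<delta> * norm p) * (P p / cmin)"
        by (meson exp_gt_zero less_imp_le mult_left_mono order_trans)
      moreover have "0 \<le> c b" using cpos b by (simp add: less_imp_le)
      ultimately show ?thesis by (intro mult_left_mono)
    qed
    have "N p \<le> (\<Sum>b\<in>Am. c b * (exp (- \<delta> * norm p) * (P p / cmin)))"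
      unfolding N_def by (intro sum_mono trm)
    also have "\<dots> = (\<Sum>b\<in>Am. c b) * (exp (- \<delta> * norm p) * (P p / cmin))"
      by (rule sum_distrib_right[symmetric])
    also have "\<dots> = K * exp (- \<delta> * norm p) * P p"
      by (simp add: K_def)
    finally show ?thesis using Ppos[of p] by (simp add: pos_divide_le_eq)
  qed
  define r0 where "r0 = N 0 / P 0"
  have r0pos: "0 < r0" using Npos Ppos by (simp add: r0_def)
  define R where "R = \<bar>ln (r0 / K)\<bar> / \<delta>"
  have Rnn: "0 \<le> R" using \<delta>pos by (simp add: R_def)
  have far: "N p / P p < r0" if p: "p \<in> L" "R < norm p" for p
  proof -
    have "\<bar>ln (r0 / K)\<bar> < \<delta> * norm p" using p(2) \<delta>pos by (simp add: R_def field_simps)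
    then have "- \<delta> * norm p < ln (r0 / K)" by linarith
    then have "exp (- \<delta> * norm p) < r0 / K" using r0pos Kpos
      by (metis exp_less_cancel_iff exp_ln divide_pos_pos)
    then have "K * exp (- \<delta> * norm p) < r0" using Kpos by (simp add: field_simps)
    then show ?thesis using bound[OF p(1)] by linarith
  qed
  define KS where "KS = L \<inter> cball 0 R"
  have KScomp: "compact KS" unfolding KS_def L_def
  proof -
    have "compact (cball 0 R \<inter> span G)" by (rule compact_Int_closed[OF compact_cball closed_span])
    then show "compact (span G \<inter> cball 0 R)" by (simp add: Int_commute)
  qed
  have KS0: "0 \<in> KS" using Rnn by (simp add: KS_def L_def span_zero)
  have cont: "continuous_on KS (\<lambda>u. N u / P u)"
    unfolding N_def P_def
    by (intro continuous_intros) (use Ppos[unfolded P_def] in \<open>metis less_irrefl\<close>)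
  obtain us where us: "us \<in> KS" "\<And>y. y \<in> KS \<Longrightarrow> N y / P y \<le> N us / P us"
    using continuous_attains_sup[OF KScomp _ cont] KS0 by blast
  have "N u / P u \<le> N us / P us" for u
  proof -
    obtain p where p: "p \<in> L" "N u / P u = N p / P p" using inv by blast
    show ?thesis
    proof (cases "norm p \<le> R")
      case True then have "p \<in> KS" using p by (simp add: KS_def)
      then show ?thesis using us p by simp
    next
      case False
      then have "N p / P p < r0" using far p by simp
      also have "r0 \<le> N us / P us" using us(2)[OF KS0] by (simp add: r0_def)
      finally show ?thesis using p by simp
    qed
  qed
  then show ?thesis by blast
qed

lemma ns_extract:
  fixes Ap Am :: "(real^'n) set"
  assumes "nonseparable Ap Am"
  shows "\<forall>h. \<exists>w c. (\<forall>a\<in>Ap. w \<bullet> a + c \<le> h a) \<and> Am \<subseteq> convex hull {a\<in>Ap. w \<bullet> a + c = h a}"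
proof
  fix h :: "real^'n \<Rightarrow> real"
  obtain D where D: "D \<in> common_refinement Ap" "Am \<subseteq> D"
    using assms unfolding nonseparable_def refinement_cells_dim_def by blast
  then obtain \<sigma> where \<sigma>: "\<forall>h. \<sigma> h \<in> reg_cells Ap h" "D = \<Inter> (range \<sigma>)"
    unfolding common_refinement_def by blast
  have "Am \<subseteq> \<sigma> h" using D(2) \<sigma>(2) by blast
  moreover obtain C w c where "\<sigma> h = convex hull C" "\<forall>a\<in>Ap. w \<bullet> a + c \<le> h a" "C = {a\<in>Ap. w \<bullet> a + c = h a}"
    using \<sigma>(1) unfolding reg_cells_def by blast
  ultimately show "\<exists>w c. (\<forall>a\<in>Ap. w \<bullet> a + c \<le> h a) \<and> Am \<subseteq> convex hull {a\<in>Ap. w \<bullet> a + c = h a}"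
    by blast
qed

lemma main_SONC:
  fixes Ap Am :: "(real^'n) set" and c :: "real^'n \<Rightarrow> real"
  assumes finAp: "finite Ap" and finAm: "finite Am" and disj: "Ap \<inter> Am = {}"
    and rel: "Am \<subseteq> rel_interior (convex hull Ap)"
    and NS: "\<forall>h. \<exists>w c. (\<forall>a\<in>Ap. w \<bullet> a + c \<le> h a) \<and> Am \<subseteq> convex hull {a\<in>Ap. w \<bullet> a + c = h a}"
    and cpos: "\<forall>a\<in>Ap \<union> Am. 0 < c a"
    and cop: "\<forall>x\<in>pos_orthant. 0 \<le> (\<Sum>a\<in>Ap. c a * monom a x) - (\<Sum>b\<in>Am. c b * monom b x)"
  shows "SONC (\<lambda>x. (\<Sum>a\<in>Ap. c a * monom a x) - (\<Sum>b\<in>Am. c b * monom b x))"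
proof (cases "Am = {}")
  case True
  have "SONC (\<lambda>x. \<Sum>a\<in>Ap. c a * monom a x)"
    using finAp cpos by (intro SONC_sum SONC_monomial) (auto intro: less_imp_le)
  then show ?thesis using True by simp
next
  case Amne: False
  have Apne: "Ap \<noteq> {}" using Amne rel by auto
  define P where "P = (\<lambda>u. \<Sum>a\<in>Ap. c a * exp (a \<bullet> u))"
  define N where "N = (\<lambda>u. \<Sum>b\<in>Am. c b * exp (b \<bullet> u))"
  obtain us where us: "\<And>u. N u / P u \<le> N us / P us"
    using max_ratio[OF finAp finAm Apne Amne rel cpos] unfolding P_def N_def by blast
  have Ppos: "0 < P u" for u
    unfolding P_def using finAp Apne cpos by (intro sum_pos) auto
  have Npos: "0 < N u" for u
    unfolding N_def using finAm Amne cpos by (intro sum_pos) auto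
  have NP: "N u \<le> P u" for u
  proof -
    have "0 \<le> (\<Sum>a\<in>Ap. c a * monom a (expv u)) - (\<Sum>b\<in>Am. c b * monom b (expv u))"
      using cop expv_pos[of u] by blast
    then show ?thesis by (simp add: monom_expv P_def N_def)
  qed
  define rs where "rs = N us / P us"
  have rs_pos: "0 < rs" using Npos Ppos by (simp add: rs_def)
  have rs_le: "rs \<le> 1" using NP[of us] Ppos[of us] by (simp add: rs_def)
  have Nle: "N u \<le> rs * P u" for u
    using us[of u] Ppos[of u] by (simp add: rs_def pos_divide_le_eq)
  define Cw where "Cw a = rs * c a * exp (a \<bullet> us)" for a
  define Dw where "Dw b = c b * exp (b \<bullet> us)" for b
  have shiftP: "(\<Sum>a\<in>Ap. Cw a * exp (a \<bullet> v)) = rs * P (us + v)" for v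
    by (simp add: Cw_def P_def sum_distrib_left inner_add_right exp_add mult.assoc)
  have shiftN: "(\<Sum>b\<in>Am. Dw b * exp (b \<bullet> v)) = N (us + v)" for v
    by (simp add: Dw_def N_def inner_add_right exp_add mult.assoc)
  have nonneg: "0 \<le> (\<Sum>a\<in>Ap. Cw a * exp (a \<bullet> v)) - (\<Sum>b\<in>Am. Dw b * exp (b \<bullet> v))" for v
    using Nle[of "us + v"] by (simp add: shiftP shiftN)
  have zero: "(\<Sum>a\<in>Ap. Cw a) - (\<Sum>b\<in>Am. Dw b) = 0"
    using shiftP[of 0] shiftN[of 0] Ppos[of us] by (simp add: rs_def)
  have bary: "(\<Sum>a\<in>Ap. Cw a *\<^sub>R a) = (\<Sum>b\<in>Am. Dw b *\<^sub>R b)"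
    by (rule grad_zero[OF finAp finAm nonneg zero])
  have Cw_nn: "\<forall>a\<in>Ap. 0 \<le> Cw a" using cpos rs_pos by (auto simp: Cw_def intro!: mult_nonneg_nonneg less_imp_le)
  have Dw_nn: "\<forall>b\<in>Am. 0 \<le> Dw b" using cpos by (simp add: Dw_def less_imp_le)
  obtain \<pi> where \<pi>0: "\<forall>a\<in>Ap. \<forall>b\<in>Am. 0 \<le> \<pi> (a,b)"
    and row: "\<forall>a\<in>Ap. (\<Sum>b\<in>Am. \<pi> (a,b)) = Cw a"
    and col: "\<forall>b\<in>Am. (\<Sum>a\<in>Ap. \<pi> (a,b)) = Dw b"
    and bar: "\<forall>b\<in>Am. (\<Sum>a\<in>Ap. \<pi> (a,b) *\<^sub>R a) = Dw b *\<^sub>R b"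
    using split_exists[OF finAp finAm NS Cw_nn Dw_nn _ bary] zero by auto
  define g where "g b x = (\<Sum>a\<in>Ap. \<pi> (a,b) * exp (a \<bullet> (- us)) * monom a x)
     - (\<Sum>a\<in>Ap. \<pi> (a,b)) * exp (b \<bullet> (- us)) * monom b x" for b x
  have gS: "SONC (g b)" if b: "b \<in> Am" for b
  proof -
    have bAp: "b \<notin> Ap" using disj b by auto
    have "(\<Sum>a\<in>Ap. \<pi> (a,b) *\<^sub>R (a - b)) = (\<Sum>a\<in>Ap. \<pi> (a,b) *\<^sub>R a) - (\<Sum>a\<in>Ap. \<pi> (a,b)) *\<^sub>R b"
      by (simp add: scaleR_diff_right sum_subtractf scaleR_sum_left)
    also have "\<dots> = 0" using bar col b by simp
    finally have "(\<Sum>a\<in>Ap. \<pi> (a,b) *\<^sub>R (a - b)) = 0" .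
    then show ?thesis unfolding g_def
      using dec[OF finAp bAp, of "\<lambda>a. \<pi> (a,b)" "- us"] \<pi>0 b by auto
  qed
  have S1: "SONC (\<lambda>x. \<Sum>b\<in>Am. g b x)" using finAm gS by (intro SONC_sum) auto
  have S2: "SONC (\<lambda>x. \<Sum>a\<in>Ap. (1 - rs) * c a * monom a x)"
    using finAp cpos rs_le by (intro SONC_sum SONC_monomial) (auto intro!: mult_nonneg_nonneg intro: less_imp_le)
  show ?thesis
  proof (rule SONC_cong[OF SONC_add[OF S1 S2]])
    fix x :: "real^'n"
    have e1: "(\<Sum>b\<in>Am. \<Sum>a\<in>Ap. \<pi> (a,b) * exp (a \<bullet> (- us)) * monom a x) = (\<Sum>a\<in>Ap. rs * c a * monom a x)"
    proof -
      have "(\<Sum>b\<in>Am. \<Sum>a\<in>Ap. \<pi> (a,b) * exp (a \<bullet> (- us)) * monom a x)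
          = (\<Sum>a\<in>Ap. (\<Sum>b\<in>Am. \<pi> (a,b)) * (exp (a \<bullet> (- us)) * monom a x))"
        by (subst sum.swap) (simp add: sum_distrib_right mult.assoc)
      also have "\<dots> = (\<Sum>a\<in>Ap. rs * c a * monom a x)"
      proof (rule sum.cong[OF refl])
        fix a assume "a \<in> Ap"
        then have "(\<Sum>b\<in>Am. \<pi> (a,b)) = Cw a" using row by simp
        moreover have "exp (a \<bullet> us) * exp (a \<bullet> (- us)) = 1" by (simp flip: exp_add)
        ultimately show "(\<Sum>b\<in>Am. \<pi> (a,b)) * (exp (a \<bullet> (- us)) * monom a x) = rs * c a * monom a x"
          by (simp add: Cw_def)
      qed
      finally show ?thesis .
    qed
    have e2: "(\<Sum>b\<in>Am. (\<Sum>a\<in>Ap. \<pi> (a,b)) * exp (b \<bullet> (- us)) * monom b x) = (\<Sum>b\<in>Am. c b * monom b x)"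
    proof (rule sum.cong[OF refl])
      fix b assume "b \<in> Am"
      then have "(\<Sum>a\<in>Ap. \<pi> (a,b)) = Dw b" using col by simp
      moreover have "exp (b \<bullet> us) * exp (b \<bullet> (- us)) = 1" by (simp flip: exp_add)
      ultimately show "(\<Sum>a\<in>Ap. \<pi> (a,b)) * exp (b \<bullet> (- us)) * monom b x = c b * monom b x"
        by (simp add: Dw_def)
    qed
    have "(\<Sum>b\<in>Am. g b x) = (\<Sum>a\<in>Ap. rs * c a * monom a x) - (\<Sum>b\<in>Am. c b * monom b x)"
      unfolding g_def by (simp only: sum_subtractf e1 e2)
    moreover have "(\<Sum>a\<in>Ap. rs * c a * monom a x) + (\<Sum>a\<in>Ap. (1 - rs) * c a * monom a x) = (\<Sum>a\<in>Ap. c a * monom a x)"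
      by (simp add: sum.distrib[symmetric] algebra_simps)
    ultimately show "(\<Sum>a\<in>Ap. c a * monom a x) - (\<Sum>b\<in>Am. c b * monom b x)
        = (\<Sum>b\<in>Am. g b x) + (\<Sum>a\<in>Ap. (1 - rs) * c a * monom a x)" by simp
  qed
qed

theorem theorem3p15:
  fixes Ap Am :: "(real ^ 'n) set"
  assumes "\<forall>a\<in>Ap \<union> Am. \<forall>i. a $ i \<in> \<int>"
    and "finite Ap" and "finite Am" and "Ap \<inter> Am = {}"
    and "Am \<subseteq> rel_interior (convex hull Ap)"
    and "nonseparable Ap Am"
  shows "C_SONC Ap Am = C_copos Ap Am"
proof
  show "C_SONC Ap Am \<subseteq> C_copos Ap Am"
    unfolding C_SONC_def C_copos_def using SONC_copositive by auto
  show "C_copos Ap Am \<subseteq> C_SONC Ap Am"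
  proof
    fix f assume "f \<in> C_copos Ap Am"
    then have fs: "f \<in> signomials Ap Am" and cop: "copositive f" by (auto simp: C_copos_def)
    obtain c where cpos: "\<forall>a\<in>Ap \<union> Am. 0 < c a"
      and feq: "f = (\<lambda>x. (\<Sum>a\<in>Ap. c a * monom a x) - (\<Sum>b\<in>Am. c b * monom b x))"
      using fs unfolding signomials_def by blast
    have "SONC f" unfolding feq
      using main_SONC[OF assms(2,3,4,5) ns_extract[OF assms(6)] cpos] cop
      by (simp add: feq copositive_def)
    then show "f \<in> C_SONC Ap Am" using fs by (simp add: C_SONC_def)
  qed
qed

end
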